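(* Let $p$ be a ProbNetKAT program, $S=\mathcal{S}[\![p]\!]$ and $U$ as defined in the context. Then for every $n\ge1$: (1) $(SU)^n = S^nU$; (2) $SU$ is an absorbing Markov chain whose absorbing states are exactly the states $(\emptyset,b)$ for $b\subseteq\mathsf{Pk}$.
   Context: $\mathsf{Pk}$ is a finite set of packets; $[\varphi]$ is the Iverson bracket. For a ProbNetKAT program $p$, $\mathcal{B}[\![p]\!]\in[0,1]^{2^{\mathsf{Pk}}\times 2^{\mathsf{Pk}}}$ is its stochastic matrix semantics ($\mathcal{B}[\![p]\!]_{ab}$ = probability of output set $b$ on input set $a$); in particular every program maps input $\emptyset$ to output $\emptyset$ with probability 1. The small-step matrix on states $(a,b)\in 2^{\mathsf{Pk}}\times 2^{\mathsf{Pk}}$ is $S_{(a,b),(a',b')}=[b'=b\cup a]\,\mathcal{B}[\![p]\!]_{a,a'}$. A state $(a,b)$ is saturated if whenever $(S^n)_{(a,b),(a',b')}>0$ for some $n\ge0$ we have $b'=b$. $U_{(a,b),(a',b')}=[b'=b][a'=\emptyset]$ if $(a,b)$ is saturated, and $[b'=b][a'=a]$ otherwise. A state $s$ of a Markov chain $T$ is absorbing if $T_{s,s'}=[s=s']$ for all $s'$; $T$ is an absorbing Markov chain if from every state some absorbing state is reachable ($T^n_{s,s'}>0$ for some $n\ge0$ and absorbing $s'$). *)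

theory Defs
  imports Complex_Main
begin

type_synonym 's mat = "'s \<Rightarrow> 's \<Rightarrow> real"

definition mmult :: "('s::finite) mat \<Rightarrow> 's mat \<Rightarrow> 's mat" where
  "mmult M N = (\<lambda>i k. \<Sum>j\<in>UNIV. M i j * N j k)"

definition mone :: "'s mat" where
  "mone = (\<lambda>i j. if i = j then 1 else 0)"

primrec mpow :: "('s::finite) mat \<Rightarrow> nat \<Rightarrow> 's mat" where
  "mpow M 0 = mone"
| "mpow M (Suc n) = mmult (mpow M n) M"

definition stochastic :: "('s::finite) mat \<Rightarrow> bool" where
  "stochastic M \<longleftrightarrow> (\<forall>i j. 0 \<le> M i j) \<and> (\<forall>i. (\<Sum>j\<in>UNIV. M i j) = 1)"

text \<open>Small-step matrix S built from the big-step matrix B = B[[p]].\<close>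
definition small_step :: "('pk::finite) set mat \<Rightarrow> ('pk set \<times> 'pk set) mat" where
  "small_step B = (\<lambda>(a, b) (a', b'). if b' = b \<union> a then B a a' else 0)"

definition saturated :: "('pk::finite) set mat \<Rightarrow> 'pk set \<times> 'pk set \<Rightarrow> bool" where
  "saturated B s \<longleftrightarrow>
     (\<forall>n s'. mpow (small_step B) n s s' > 0 \<longrightarrow> snd s' = snd s)"

definition U_mat :: "('pk::finite) set mat \<Rightarrow> ('pk set \<times> 'pk set) mat" where
  "U_mat B = (\<lambda>(a, b) (a', b').
      if saturated B (a, b) then (if b' = b \<and> a' = {} then 1 else 0)
      else (if b' = b \<and> a' = a then 1 else 0))"

definition absorbing_state :: "('s::finite) mat \<Rightarrow> 's \<Rightarrow> bool" where
  "absorbing_state T s \<longleftrightarrow> (\<forall>s'. T s s' = (if s = s' then 1 else 0))"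

definition absorbing_chain :: "('s::finite) mat \<Rightarrow> bool" where
  "absorbing_chain T \<longleftrightarrow> stochastic T \<and>
     (\<forall>s. \<exists>n s'. mpow T n s s' > 0 \<and> absorbing_state T s')"

end

theory Submission imports Defs begin

definition nonneg :: "('s::finite) mat \<Rightarrow> bool" where
  "nonneg M \<longleftrightarrow> (\<forall>i j. 0 \<le> M i j)"

lemma mmult_assoc: "mmult (mmult M N) P = mmult M (mmult N P)"
proof (intro ext)
  fix i l
  show "mmult (mmult M N) P i l = mmult M (mmult N P) i l"
  proof -
    have "mmult (mmult M N) P i l = (\<Sum>k\<in>UNIV. \<Sum>j\<in>UNIV. M i j * N j k * P k l)"
      unfolding mmult_def by (simp add: sum_distrib_right)
    also have "\<dots> = (\<Sum>j\<in>UNIV. \<Sum>k\<in>UNIV. M i j * N j k * P k l)"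
      by (rule sum.swap)
    also have "\<dots> = mmult M (mmult N P) i l"
      unfolding mmult_def by (simp add: sum_distrib_left mult.assoc)
    finally show ?thesis .
  qed
qed

lemma mmult_one_right: "mmult M mone = M"
proof (intro ext)
  fix i k
  have "(\<Sum>j\<in>UNIV. M i j * (if j = k then 1 else 0)) = (\<Sum>j\<in>UNIV. if j = k then M i j else 0)"
    by (rule sum.cong) auto
  then show "mmult M mone i k = M i k" by (simp add: mmult_def mone_def)
qed

lemma mmult_one_left: "mmult mone M = M"
proof (intro ext)
  fix i k
  have "(\<Sum>j\<in>UNIV. (if i = j then 1 else 0) * M j k) = (\<Sum>j\<in>UNIV. if i = j then M j k else 0)"
    by (rule sum.cong) auto
  then show "mmult mone M i k = M i k" by (simp add: mmult_def mone_def)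
qed

lemma mpow_one: "mpow M 1 = M"
  by (simp add: mmult_one_left)

lemma mpow_add: "mpow M (m + n) = mmult (mpow M m) (mpow M n)"
  by (induction n) (simp_all add: mmult_one_right mmult_assoc)

lemma mmult_apply: "mmult M N i k = (\<Sum>j\<in>UNIV. M i j * N j k)"
  by (simp add: mmult_def)

lemma nonneg_mmult: "nonneg M \<Longrightarrow> nonneg N \<Longrightarrow> nonneg (mmult M N)"
  unfolding nonneg_def mmult_def by (auto intro: sum_nonneg)

lemma nonneg_mone: "nonneg mone"
  unfolding nonneg_def mone_def by auto

lemma nonneg_mpow: "nonneg M \<Longrightarrow> nonneg (mpow M n)"
  by (induction n) (simp_all add: nonneg_mone nonneg_mmult)

lemma mmult_ge: "nonneg M \<Longrightarrow> nonneg N \<Longrightarrow> M i j * N j k \<le> mmult M N i k"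
  unfolding mmult_def nonneg_def
  by (rule member_le_sum) auto

lemma mmult_pos: "nonneg M \<Longrightarrow> nonneg N \<Longrightarrow> M i j > 0 \<Longrightarrow> N j k > 0 \<Longrightarrow> mmult M N i k > 0"
  by (metis mmult_ge mult_pos_pos order_less_le_trans)

lemma mmult_pos_ex: "nonneg M \<Longrightarrow> nonneg N \<Longrightarrow> mmult M N i k > 0 \<Longrightarrow> \<exists>j. M i j > 0 \<and> N j k > 0"
proof (rule ccontr)
  assume nn: "nonneg M" "nonneg N" and p: "mmult M N i k > 0" and c: "\<not> (\<exists>j. M i j > 0 \<and> N j k > 0)"
  have "\<And>j. M i j * N j k = 0"
    using nn c unfolding nonneg_def by (metis less_eq_real_def mult_eq_0_iff)
  then have "mmult M N i k = 0" unfolding mmult_def by (intro sum.neutral) auto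
  with p show False by simp
qed

lemma stochastic_nonneg: "stochastic M \<Longrightarrow> nonneg M"
  by (simp add: stochastic_def nonneg_def)

lemma stochastic_mmult: "stochastic M \<Longrightarrow> stochastic N \<Longrightarrow> stochastic (mmult M N)"
proof -
  assume m: "stochastic M" and n: "stochastic N"
  have "nonneg (mmult M N)" using m n by (simp add: nonneg_mmult stochastic_nonneg)
  moreover have "(\<Sum>k\<in>UNIV. mmult M N i k) = 1" for i
  proof -
    have "(\<Sum>k\<in>UNIV. mmult M N i k) = (\<Sum>j\<in>UNIV. M i j * (\<Sum>k\<in>UNIV. N j k))"
      unfolding mmult_def sum_distrib_left by (rule sum.swap)
    also have "\<dots> = 1" using m n by (simp add: stochastic_def)
    finally show ?thesis .
  qed
  ultimately show ?thesis by (simp add: stochastic_def nonneg_def)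
qed

lemma stochastic_pos_ex: "stochastic M \<Longrightarrow> \<exists>j. M i j > 0"
proof (rule ccontr)
  assume m: "stochastic M" and c: "\<not> (\<exists>j. M i j > 0)"
  then have "\<And>j. M i j = 0" unfolding stochastic_def by (metis less_eq_real_def)
  then have "(\<Sum>j\<in>UNIV. M i j) = 0" by simp
  then show False using m by (simp add: stochastic_def)
qed

lemma stochastic_one_other: "stochastic M \<Longrightarrow> M i j = 1 \<Longrightarrow> k \<noteq> j \<Longrightarrow> M i k = 0"
proof -
  assume m: "stochastic M" and e: "M i j = 1" and k: "k \<noteq> j"
  have "(\<Sum>x\<in>UNIV. M i x) = M i j + (\<Sum>x\<in>UNIV - {j}. M i x)"
    by (simp add: sum.remove)
  then have "(\<Sum>x\<in>UNIV - {j}. M i x) = 0" using m e by (simp add: stochastic_def)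
  then have "\<forall>x\<in>UNIV - {j}. M i x = 0"
    using m by (subst sum_nonneg_eq_0_iff[symmetric]) (auto simp: stochastic_def)
  then show ?thesis using k by auto
qed

lemma absorbing_mpow: "absorbing_state T s \<Longrightarrow> mpow T n s u = (if u = s then 1 else 0)"
proof (induction n arbitrary: u)
  case 0 then show ?case by (auto simp: mone_def)
next
  case (Suc n)
  have "mpow T (Suc n) s u = (\<Sum>j\<in>UNIV. (if j = s then 1 else 0) * T j u)"
    using Suc by (simp add: mmult_def)
  also have "\<dots> = (\<Sum>j\<in>UNIV. if j = s then T j u else 0)"
    by (rule sum.cong) auto
  also have "\<dots> = T s u" by simp
  also have "\<dots> = (if u = s then 1 else 0)" using Suc.prems by (auto simp: absorbing_state_def)
  finally show ?case .
qed

lemma sum_pair_UNIV: "(\<Sum>j\<in>(UNIV::('a::finite \<times> 'b::finite) set). f j) = (\<Sum>x\<in>UNIV. \<Sum>y\<in>UNIV. f (x,y))"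
  by (subst UNIV_Times_UNIV[symmetric]) (rule sum.cartesian_product')

lemma small_step_stoch:
  assumes "stochastic B" shows "stochastic (small_step B)"
proof -
  have "(\<Sum>j\<in>UNIV. small_step B s j) = 1" for s
  proof (cases s)
    case (Pair a b)
    have "(\<Sum>j\<in>UNIV. small_step B s j) = (\<Sum>x\<in>UNIV. \<Sum>y\<in>UNIV. if y = b \<union> a then B a x else 0)"
      by (simp add: sum_pair_UNIV Pair small_step_def)
    also have "\<dots> = (\<Sum>x\<in>UNIV. B a x)" by simp
    also have "\<dots> = 1" using assms by (simp add: stochastic_def)
    finally show ?thesis .
  qed
  moreover have "0 \<le> small_step B s t" for s t
    using assms by (auto simp: small_step_def stochastic_def split: prod.splits)
  ultimately show ?thesis by (simp add: stochastic_def)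
qed

lemma U_stoch: "stochastic (U_mat B)"
proof -
  have "(\<Sum>j\<in>UNIV. U_mat B s j) = 1" for s
  proof -
    obtain a b where s: "s = (a,b)" by (cases s)
    define c where "c = (if saturated B (a,b) then ({},b) else (a,b))"
    have "(\<Sum>j\<in>UNIV. U_mat B s j) = (\<Sum>j\<in>UNIV. if j = c then 1 else 0)"
      by (intro sum.cong refl) (auto simp: s c_def U_mat_def split: prod.splits)
    also have "\<dots> = 1" by simp
    finally show ?thesis .
  qed
  moreover have "0 \<le> U_mat B s t" for s t
    by (auto simp: U_mat_def split: prod.splits)
  ultimately show ?thesis by (simp add: stochastic_def)
qed

lemma small_step_pos: "small_step B s t > 0 \<Longrightarrow> snd t = snd s \<union> fst s"
  by (auto simp: small_step_def split: prod.splits if_splits)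

lemma mono_snd:
  assumes "stochastic B" "mpow (small_step B) n s t > 0" shows "snd s \<subseteq> snd t"
  using assms(2)
proof (induction n arbitrary: t)
  case 0 then show ?case by (auto simp: mone_def split: if_splits)
next
  case (Suc n)
  have nn: "nonneg (mpow (small_step B) n)" "nonneg (small_step B)"
    using assms(1) by (simp_all add: nonneg_mpow stochastic_nonneg small_step_stoch)
  obtain j where "mpow (small_step B) n s j > 0" "small_step B j t > 0"
    using mmult_pos_ex[OF nn] Suc.prems by simp blast
  with Suc.IH small_step_pos show ?case by fastforce
qed

lemma sat_reach:
  assumes "stochastic B" "saturated B s" "mpow (small_step B) n s t > 0"
  shows "saturated B t"
  unfolding saturated_def
proof (intro allI impI)
  fix m u assume "mpow (small_step B) m t u > 0"
  then have "mpow (small_step B) (n + m) s u > 0"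
    using assms by (simp add: mpow_add mmult_pos nonneg_mpow stochastic_nonneg small_step_stoch)
  then have "snd u = snd s" using assms(2) unfolding saturated_def by blast
  moreover have "snd t = snd s" using assms(2,3) unfolding saturated_def by blast
  ultimately show "snd u = snd t" by simp
qed

lemma empty_step:
  assumes "stochastic B" "B {} {} = 1"
  shows "small_step B ({},b) t = (if t = ({},b) then 1 else 0)"
proof -
  obtain a' b' where t: "t = (a',b')" by (cases t)
  have e: "B {} a' = (if a' = {} then 1 else 0)"
    using stochastic_one_other[OF assms, of a'] assms(2) by (cases "a' = {}") simp_all
  show ?thesis using assms(2) by (simp add: t small_step_def e)
qed

lemma empty_mpow:
  assumes "stochastic B" "B {} {} = 1"
  shows "mpow (small_step B) n ({},b) t = (if t = ({},b) then 1 else 0)"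
  by (rule absorbing_mpow) (simp add: absorbing_state_def empty_step[OF assms] eq_commute)

lemma empty_sat:
  assumes "stochastic B" "B {} {} = 1"
  shows "saturated B ({},b)"
  unfolding saturated_def using empty_mpow[OF assms]
  by (metis less_irrefl snd_conv)

lemma SU_sat:
  assumes B: "stochastic B" "B {} {} = 1" and sat: "saturated B s"
  shows "mmult (small_step B) (U_mat B) s u = (if u = ({}, snd s) then 1 else 0)"
proof -
  have tm: "small_step B s j * U_mat B j u = small_step B s j * (if u = ({}, snd s) then 1 else 0)" for j
  proof (cases "small_step B s j = 0")
    case False
    then have pos: "small_step B s j > 0"
      using stochastic_nonneg[OF small_step_stoch[OF B(1)]] unfolding nonneg_def
      by (metis less_eq_real_def)
    then have p1: "mpow (small_step B) 1 s j > 0" by (simp only: mpow_one)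
    then have "saturated B j" using sat_reach[OF B(1) sat] by blast
    moreover have "snd j = snd s" using sat p1 unfolding saturated_def by blast
    ultimately show ?thesis
      by (cases j; cases u) (auto simp: U_mat_def)
  qed simp
  have "mmult (small_step B) (U_mat B) s u = (\<Sum>j\<in>UNIV. small_step B s j * (if u = ({}, snd s) then 1 else 0))"
    unfolding mmult_apply by (rule sum.cong[OF refl]) (rule tm)
  also have "\<dots> = (\<Sum>j\<in>UNIV. small_step B s j) * (if u = ({}, snd s) then 1 else 0)"
    by (rule sum_distrib_right[symmetric])
  also have "\<dots> = (if u = ({}, snd s) then 1 else 0)"
  proof -
    have "(\<Sum>j\<in>UNIV. small_step B s j) = 1"
      using small_step_stoch[OF B(1)] unfolding stochastic_def by blast
    then show ?thesis by simp
  qed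
  finally show ?thesis .
qed

lemma USU:
  fixes B :: "('pk::finite) set \<Rightarrow> 'pk set \<Rightarrow> real"
  assumes B: "stochastic B" "B {} {} = 1"
  shows "mmult (U_mat B) (mmult (small_step B) (U_mat B)) = mmult (small_step B) (U_mat B)"
proof (intro ext)
  fix s u :: "'pk set \<times> 'pk set"
  let ?X = "mmult (small_step B) (U_mat B)"
  obtain a b where s: "s = (a,b)" by (cases s)
  show "mmult (U_mat B) ?X s u = ?X s u"
  proof (cases "saturated B (a,b)")
    case True
    have Us: "U_mat B s j = (if j = ({},b) then 1 else 0)" for j
      by (cases j) (auto simp: s U_mat_def True)
    have "mmult (U_mat B) ?X s u = (\<Sum>j\<in>UNIV. if j = ({},b) then ?X j u else 0)"
      by (simp only: mmult_apply[of "U_mat B"] Us) (rule sum.cong; simp)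
    also have "\<dots> = ?X ({},b) u" by simp
    also have "\<dots> = (if u = ({}, b) then 1 else 0)"
      using SU_sat[OF B empty_sat[OF B]] by simp
    also have "\<dots> = ?X s u" using SU_sat[OF B True] by (simp add: s)
    finally show ?thesis .
  next
    case False
    have Us: "U_mat B s j = (if j = s then 1 else 0)" for j
      by (cases j) (auto simp: s U_mat_def False)
    have "mmult (U_mat B) ?X s u = (\<Sum>j\<in>UNIV. if j = s then ?X j u else 0)"
      by (simp only: mmult_apply[of "U_mat B"] Us) (rule sum.cong; simp)
    also have "\<dots> = ?X s u" by simp
    finally show ?thesis .
  qed
qed

lemma pow_eq:
  assumes B: "stochastic B" "B {} {} = 1"
  shows "mpow (mmult (small_step B) (U_mat B)) (Suc n) = mmult (mpow (small_step B) (Suc n)) (U_mat B)"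
proof (induction n)
  case 0 then show ?case by (simp add: mmult_one_left)
next
  case (Suc n)
  have "mpow (mmult (small_step B) (U_mat B)) (Suc (Suc n))
      = mmult (mmult (mpow (small_step B) (Suc n)) (U_mat B)) (mmult (small_step B) (U_mat B))"
    using Suc by simp
  also have "\<dots> = mmult (mpow (small_step B) (Suc n)) (mmult (small_step B) (U_mat B))"
    by (simp add: mmult_assoc USU[OF B])
  also have "\<dots> = mmult (mpow (small_step B) (Suc (Suc n))) (U_mat B)"
    by (simp add: mmult_assoc)
  finally show ?case .
qed

lemma absorbing_empty:
  assumes B: "stochastic B" "B {} {} = 1"
  shows "absorbing_state (mmult (small_step B) (U_mat B)) ({},b)"
  unfolding absorbing_state_def using SU_sat[OF B empty_sat[OF B]] by auto

lemma U_pos: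
  obtains u where "U_mat B t u = 1" "snd u = snd t" "u = t \<or> fst u = {}"
proof -
  obtain a b where t: "t = (a,b)" by (cases t)
  show ?thesis
  proof (cases "saturated B t")
    case True then show ?thesis using that[of "({}, b)"] by (simp add: t U_mat_def)
  next
    case False then show ?thesis using that[of t] by (simp add: t U_mat_def)
  qed
qed

lemma absorbing_imp:
  assumes B: "stochastic B" "B {} {} = 1"
    and abs: "absorbing_state (mmult (small_step B) (U_mat B)) s"
  shows "fst s = {}"
proof (rule ccontr)
  assume ne: "fst s \<noteq> {}"
  obtain a b where s: "s = (a,b)" by (cases s)
  show False
  proof (cases "saturated B s")
    case True
    have "mmult (small_step B) (U_mat B) s s = (if s = s then 1 else 0)"
      using abs unfolding absorbing_state_def by blast
    then have "mmult (small_step B) (U_mat B) s s = 1" by simp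
    moreover have "mmult (small_step B) (U_mat B) s s = 0" using SU_sat[OF B True, of s] ne s by auto
    ultimately show False by simp
  next
    case False
    then obtain n t where nt: "mpow (small_step B) n s t > 0" "snd t \<noteq> snd s"
      unfolding saturated_def by blast
    have "n \<noteq> 0" using nt by (auto simp: mone_def split: if_splits)
    then obtain m where n: "n = Suc m" by (cases n) auto
    obtain u where u: "U_mat B t u = 1" "snd u = snd t" by (rule U_pos)
    have "mpow (small_step B) n s t * U_mat B t u \<le> mmult (mpow (small_step B) n) (U_mat B) s u"
      by (rule mmult_ge) (simp_all add: nonneg_mpow stochastic_nonneg small_step_stoch[OF B(1)] U_stoch)
    then have "mmult (mpow (small_step B) n) (U_mat B) s u > 0" using nt u by simp
    moreover have "mmult (mpow (small_step B) n) (U_mat B) s u = (if u = s then 1 else 0)"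
      using pow_eq[OF B, of m] absorbing_mpow[OF abs, of n u] n by simp
    moreover have "u \<noteq> s" using u nt by auto
    ultimately show False by simp
  qed
qed

theorem proposition4p6:
  fixes B :: "('pk::finite) set \<Rightarrow> 'pk set \<Rightarrow> real"
  assumes "stochastic B"
    and "B {} {} = 1"
  shows "(\<forall>n\<ge>1. mpow (mmult (small_step B) (U_mat B)) n
                 = mmult (mpow (small_step B) n) (U_mat B))
       \<and> absorbing_chain (mmult (small_step B) (U_mat B))
       \<and> (\<forall>s. absorbing_state (mmult (small_step B) (U_mat B)) s \<longleftrightarrow> fst s = {})"
proof (intro conjI allI impI)
  note B = assms
  show P1: "mpow (mmult (small_step B) (U_mat B)) n = mmult (mpow (small_step B) n) (U_mat B)"
    if "n \<ge> 1" for n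
    using that pow_eq[OF B, of "n - 1"] by simp
  show P3: "absorbing_state (mmult (small_step B) (U_mat B)) s \<longleftrightarrow> fst s = {}" for s
    using absorbing_imp[OF B, of s] absorbing_empty[OF B, of "snd s"] by (cases s) auto
  show "absorbing_chain (mmult (small_step B) (U_mat B))"
    unfolding absorbing_chain_def
  proof (intro conjI allI)
    show "stochastic (mmult (small_step B) (U_mat B))"
      by (simp add: stochastic_mmult small_step_stoch[OF B(1)] U_stoch)
    fix s
    let ?S = "small_step B"
    define R where "R = {t. \<exists>n\<ge>1. mpow ?S n s t > 0}"
    have nnS: "nonneg (mpow ?S k)" for k
      by (simp add: nonneg_mpow stochastic_nonneg small_step_stoch[OF B(1)])
    obtain t0 where "?S s t0 > 0" using stochastic_pos_ex[OF small_step_stoch[OF B(1)]] by blast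
    then have "mpow ?S 1 s t0 > 0" by (simp only: mpow_one)
    then have "t0 \<in> R" unfolding R_def by blast
    then have Rne: "R \<noteq> {}" by auto
    have finR: "finite R" by simp
    define M where "M = Max ((card \<circ> snd) ` R)"
    have "M \<in> (card \<circ> snd) ` R" unfolding M_def using Rne finR by (intro Max_in) auto
    then obtain t where tR: "t \<in> R" and tM: "card (snd t) = M" by auto
    have maxt: "card (snd t') \<le> card (snd t)" if "t' \<in> R" for t'
      unfolding tM M_def using that finR by (intro Max_ge) auto
    obtain n where n: "n \<ge> 1" "mpow ?S n s t > 0" using tR unfolding R_def by blast
    have satt: "saturated B t"
      unfolding saturated_def
    proof (intro allI impI)
      fix m u assume mu: "mpow ?S m t u > 0"
      have nm: "mpow ?S (n + m) s u > 0"
        unfolding mpow_add by (rule mmult_pos[OF nnS nnS n(2) mu])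
      have "n + m \<ge> 1" using n(1) by simp
      then have "u \<in> R" unfolding R_def using nm by blast
      then have "card (snd u) \<le> card (snd t)" by (rule maxt)
      moreover have "snd t \<subseteq> snd u" using mono_snd[OF B(1) mu] .
      ultimately show "snd u = snd t" using card_subset_eq[of "snd u" "snd t"] card_mono[of "snd u" "snd t"] by fastforce
    qed
    have "U_mat B t ({}, snd t) = 1" using satt by (cases t) (simp add: U_mat_def)
    moreover have "mpow ?S n s t * U_mat B t ({}, snd t) \<le> mmult (mpow ?S n) (U_mat B) s ({}, snd t)"
      by (rule mmult_ge) (simp_all add: nnS stochastic_nonneg U_stoch)
    ultimately have "mpow (mmult ?S (U_mat B)) n s ({}, snd t) > 0"
      using n P1[OF n(1)] by simp
    moreover have "absorbing_state (mmult ?S (U_mat B)) ({}, snd t)" by (simp add: P3)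
    ultimately show "\<exists>n s'. mpow (mmult ?S (U_mat B)) n s s' > 0 \<and> absorbing_state (mmult ?S (U_mat B)) s'"
      by blast
  qed
qed

end
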